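(* Let $X$ be the toric scheme associated to a fan $\Delta$ over an irreducible idempotent semiring $R$. Then $X$ is irreducible.
   Context: Semirings are commutative with $1\neq0$; idempotent means $a+a=a$; irreducible means that whenever $xy$ is nilpotent, $x$ or $y$ is nilpotent. For a fan $\Delta$ in $N_{\mathbb{R}}$ with dual lattice $\Lambda$, the toric scheme over $R$ is obtained by gluing the affine schemes $U_\sigma=\operatorname{Spec}R[\Lambda\cap\sigma^\vee]$ ($\sigma\in\Delta$) along $U_{\sigma\cap\tau}$ (the base change to $R$ of the toric monoid scheme of $\Delta$). *)

theory Defs
  imports Complex_Main
begin

definition idempotent_semiring :: "'a::comm_semiring_1 itself \<Rightarrow> bool" where
  "idempotent_semiring R \<longleftrightarrow> (\<forall>a::'a. a + a = a)"

definition nilpotent_elem :: "'a::comm_semiring_1 \<Rightarrow> bool" where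
  "nilpotent_elem x \<longleftrightarrow> (\<exists>k::nat. x ^ k = 0)"

definition irreducible_semiring :: "'a::comm_semiring_1 itself \<Rightarrow> bool" where
  "irreducible_semiring R \<longleftrightarrow>
     (\<forall>x y::'a. nilpotent_elem (x * y) \<longrightarrow> nilpotent_elem x \<or> nilpotent_elem y)"

section \<open>Cones and fans in N_R = R^n, N = Z^n, dual lattice M = Z^n\<close>

definition pair :: "('n::finite \<Rightarrow> real) \<Rightarrow> ('n \<Rightarrow> real) \<Rightarrow> real" where
  "pair u v = (\<Sum>i\<in>UNIV. u i * v i)"

definition lat :: "('n \<Rightarrow> int) \<Rightarrow> ('n \<Rightarrow> real)" where
  "lat m = (\<lambda>i. real_of_int (m i))"

definition cone_gen :: "('n::finite \<Rightarrow> int) set \<Rightarrow> ('n \<Rightarrow> real) set" where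
  "cone_gen G = {v. \<exists>c. (\<forall>g\<in>G. c g \<ge> 0) \<and> v = (\<lambda>i. \<Sum>g\<in>G. c g * real_of_int (g i))}"

definition rat_poly_cone :: "('n::finite \<Rightarrow> real) set \<Rightarrow> bool" where
  "rat_poly_cone \<sigma> \<longleftrightarrow> (\<exists>G. finite G \<and> \<sigma> = cone_gen G)"

definition strongly_convex :: "('n \<Rightarrow> real) set \<Rightarrow> bool" where
  "strongly_convex \<sigma> \<longleftrightarrow> (\<forall>v. v \<in> \<sigma> \<and> (\<lambda>i. - v i) \<in> \<sigma> \<longrightarrow> v = (\<lambda>_. 0))"

definition dual_cone :: "('n::finite \<Rightarrow> real) set \<Rightarrow> ('n \<Rightarrow> real) set" where
  "dual_cone \<sigma> = {u. \<forall>v\<in>\<sigma>. pair u v \<ge> 0}"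

definition face_of_cone :: "('n::finite \<Rightarrow> real) set \<Rightarrow> ('n \<Rightarrow> real) set \<Rightarrow> bool" where
  "face_of_cone \<tau> \<sigma> \<longleftrightarrow> (\<exists>u\<in>dual_cone \<sigma>. \<tau> = \<sigma> \<inter> {v. pair u v = 0})"

definition fan :: "('n::finite \<Rightarrow> real) set set \<Rightarrow> bool" where
  "fan \<Delta> \<longleftrightarrow> finite \<Delta> \<and> \<Delta> \<noteq> {} \<and>
     (\<forall>\<sigma>\<in>\<Delta>. rat_poly_cone \<sigma> \<and> strongly_convex \<sigma> \<and> (\<forall>\<tau>. face_of_cone \<tau> \<sigma> \<longrightarrow> \<tau> \<in> \<Delta>)) \<and>
     (\<forall>\<sigma>\<in>\<Delta>. \<forall>\<tau>\<in>\<Delta>. face_of_cone (\<sigma> \<inter> \<tau>) \<sigma> \<and> face_of_cone (\<sigma> \<inter> \<tau>) \<tau>)"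

definition dual_monoid :: "('n::finite \<Rightarrow> real) set \<Rightarrow> ('n \<Rightarrow> int) set" where
  "dual_monoid \<sigma> = {m. lat m \<in> dual_cone \<sigma>}"

section \<open>Monoid semirings R[S] as finitely supported functions M \<Rightarrow> R\<close>

definition supp :: "('m \<Rightarrow> 'a::zero) \<Rightarrow> 'm set" where
  "supp f = {m. f m \<noteq> 0}"

definition monoid_semiring :: "('n \<Rightarrow> int) set \<Rightarrow> (('n \<Rightarrow> int) \<Rightarrow> 'a::zero) set" where
  "monoid_semiring S = {f. finite (supp f) \<and> supp f \<subseteq> S}"

definition padd :: "(('n \<Rightarrow> int) \<Rightarrow> 'a::comm_semiring_1) \<Rightarrow> (('n \<Rightarrow> int) \<Rightarrow> 'a) \<Rightarrow> (('n \<Rightarrow> int) \<Rightarrow> 'a)" where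
  "padd f g = (\<lambda>m. f m + g m)"

definition pmult :: "(('n \<Rightarrow> int) \<Rightarrow> 'a::comm_semiring_1) \<Rightarrow> (('n \<Rightarrow> int) \<Rightarrow> 'a) \<Rightarrow> (('n \<Rightarrow> int) \<Rightarrow> 'a)" where
  "pmult f g = (\<lambda>m. \<Sum>p\<in>{p. f (fst p) \<noteq> 0 \<and> g (snd p) \<noteq> 0 \<and> (\<lambda>i. fst p i + snd p i) = m}.
                      f (fst p) * g (snd p))"

definition coord :: "('n::finite \<Rightarrow> real) set \<Rightarrow> (('n \<Rightarrow> int) \<Rightarrow> 'a::comm_semiring_1) set" where
  "coord \<sigma> = monoid_semiring (dual_monoid \<sigma>)"

definition semiring_ideal :: "(('n \<Rightarrow> int) \<Rightarrow> 'a::comm_semiring_1) set \<Rightarrow> (('n \<Rightarrow> int) \<Rightarrow> 'a) set \<Rightarrow> bool" where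
  "semiring_ideal A I \<longleftrightarrow> I \<subseteq> A \<and> (\<lambda>_. 0) \<in> I \<and> (\<forall>x\<in>I. \<forall>y\<in>I. padd x y \<in> I) \<and>
     (\<forall>a\<in>A. \<forall>x\<in>I. pmult a x \<in> I)"

definition prime_ideal :: "(('n \<Rightarrow> int) \<Rightarrow> 'a::comm_semiring_1) set \<Rightarrow> (('n \<Rightarrow> int) \<Rightarrow> 'a) set \<Rightarrow> bool" where
  "prime_ideal A P \<longleftrightarrow> semiring_ideal A P \<and> P \<noteq> A \<and>
     (\<forall>a\<in>A. \<forall>b\<in>A. pmult a b \<in> P \<longrightarrow> a \<in> P \<or> b \<in> P)"

definition spec :: "(('n \<Rightarrow> int) \<Rightarrow> 'a::comm_semiring_1) set \<Rightarrow> (('n \<Rightarrow> int) \<Rightarrow> 'a) set set" where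
  "spec A = {P. prime_ideal A P}"

definition zariski_open :: "(('n \<Rightarrow> int) \<Rightarrow> 'a::comm_semiring_1) set \<Rightarrow> (('n \<Rightarrow> int) \<Rightarrow> 'a) set set \<Rightarrow> bool" where
  "zariski_open A U \<longleftrightarrow> (\<exists>E\<subseteq>A. U = {P\<in>spec A. \<not> E \<subseteq> P})"

section \<open>The toric scheme: gluing the charts U_sigma along U_(sigma \<inter> tau)\<close>

text \<open>(sigma,P) ~ (tau,Q) iff both are images of one point of U_(sigma \<inter> tau) under the
  open immersions U_(sigma \<inter> tau) \<rightarrow> U_sigma, U_tau (induced by R[S_sigma] \<subseteq> R[S_(sigma \<inter> tau)]).\<close>
definition glue_rel :: "'a::comm_semiring_1 itself \<Rightarrow> ('n::finite \<Rightarrow> real) set set \<Rightarrow>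
    ((('n \<Rightarrow> real) set \<times> (('n \<Rightarrow> int) \<Rightarrow> 'a) set) \<times> (('n \<Rightarrow> real) set \<times> (('n \<Rightarrow> int) \<Rightarrow> 'a) set)) set" where
  "glue_rel R \<Delta> = {((\<sigma>, P), (\<tau>, Q)). \<sigma> \<in> \<Delta> \<and> \<tau> \<in> \<Delta> \<and>
      P \<in> spec (coord \<sigma> :: (('n \<Rightarrow> int) \<Rightarrow> 'a) set) \<and> Q \<in> spec (coord \<tau> :: (('n \<Rightarrow> int) \<Rightarrow> 'a) set) \<and>
      (\<exists>P'\<in>spec (coord (\<sigma> \<inter> \<tau>) :: (('n \<Rightarrow> int) \<Rightarrow> 'a) set).
          P = P' \<inter> coord \<sigma> \<and> Q = P' \<inter> coord \<tau>)}"

definition toric_points :: "'a::comm_semiring_1 itself \<Rightarrow> ('n::finite \<Rightarrow> real) set set \<Rightarrow>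
    (('n \<Rightarrow> real) set \<times> (('n \<Rightarrow> int) \<Rightarrow> 'a) set) set set" where
  "toric_points R \<Delta> =
     (SIGMA \<sigma>:\<Delta>. spec (coord \<sigma> :: (('n \<Rightarrow> int) \<Rightarrow> 'a) set)) // glue_rel R \<Delta>"

definition toric_open :: "'a::comm_semiring_1 itself \<Rightarrow> ('n::finite \<Rightarrow> real) set set \<Rightarrow>
    (('n \<Rightarrow> real) set \<times> (('n \<Rightarrow> int) \<Rightarrow> 'a) set) set set \<Rightarrow> bool" where
  "toric_open R \<Delta> U \<longleftrightarrow> U \<subseteq> toric_points R \<Delta> \<and>
     (\<forall>\<sigma>\<in>\<Delta>. zariski_open (coord \<sigma> :: (('n \<Rightarrow> int) \<Rightarrow> 'a) set)
        {P \<in> spec (coord \<sigma>). glue_rel R \<Delta> `` {(\<sigma>, P)} \<in> U})"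

definition irreducible_space :: "'x set \<Rightarrow> ('x set \<Rightarrow> bool) \<Rightarrow> bool" where
  "irreducible_space X opn \<longleftrightarrow> X \<noteq> {} \<and>
     (\<forall>U V. opn U \<and> opn V \<and> (X - U) \<union> (X - V) = X \<longrightarrow> X - U = X \<or> X - V = X)"

definition toric_scheme_irreducible :: "'a::comm_semiring_1 itself \<Rightarrow> ('n::finite \<Rightarrow> real) set set \<Rightarrow> bool" where
  "toric_scheme_irreducible R \<Delta> \<longleftrightarrow> irreducible_space (toric_points R \<Delta>) (toric_open R \<Delta>)"

end

theory Submission
  imports Defs "HOL-Analysis.Analysis"
begin

lemma idem_zero_sum:
  fixes a b :: "'a::comm_semiring_1"
  assumes idem: "\<forall>x::'a. x + x = x" and s: "a + b = 0"
  shows "a = 0"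
proof -
  have "a + (a + b) = a + b" by (metis add.assoc idem)
  then show ?thesis using s by simp
qed

lemma nil_mult: "nilpotent_elem (x::'a::comm_semiring_1) \<Longrightarrow> nilpotent_elem (x * y)"
  unfolding nilpotent_elem_def by (metis mult_zero_left power_mult_distrib)

lemma nil_mult2: "nilpotent_elem (y::'a::comm_semiring_1) \<Longrightarrow> nilpotent_elem (x * y)"
  using nil_mult[of y x] by (simp add: mult.commute)

lemma nil_zero: "nilpotent_elem (0::'a::comm_semiring_1)"
  unfolding nilpotent_elem_def by (metis power_one_right)

lemma nil_one: "\<not> nilpotent_elem (1::'a::comm_semiring_1)"
  unfolding nilpotent_elem_def by simp

lemma pow_zero_ge: "(x::'a::comm_semiring_1) ^ k = 0 \<Longrightarrow> k \<le> j \<Longrightarrow> x ^ j = 0"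
  by (metis le_add_diff_inverse mult_zero_left power_add)

lemma nil_add:
  fixes x y :: "'a::comm_semiring_1"
  assumes "nilpotent_elem x" "nilpotent_elem y"
  shows "nilpotent_elem (x + y)"
proof -
  obtain k l where k: "x ^ k = 0" and l: "y ^ l = 0" using assms unfolding nilpotent_elem_def by blast
  have "(x + y) ^ (k + l) = (\<Sum>i\<le>k+l. of_nat ((k+l) choose i) * x ^ i * y ^ (k + l - i))"
    by (rule binomial_ring)
  also have "\<dots> = 0"
  proof (rule sum.neutral, rule ballI)
    fix i assume "i \<in> {..k+l}"
    show "of_nat ((k+l) choose i) * x ^ i * y ^ (k + l - i) = 0"
    proof (cases "k \<le> i")
      case True then show ?thesis using pow_zero_ge[OF k] by simp
    next
      case False then have "l \<le> k + l - i" by simp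
      then show ?thesis using pow_zero_ge[OF l] by simp
    qed
  qed
  finally show ?thesis unfolding nilpotent_elem_def by blast
qed

lemma nil_sum:
  fixes f :: "'b \<Rightarrow> 'a::comm_semiring_1"
  assumes "\<forall>x::'a. x + x = x" "\<forall>i\<in>A. nilpotent_elem (f i)"
  shows "nilpotent_elem (sum f A)"
  using assms(2)
proof (induction A rule: infinite_finite_induct)
  case (infinite A) then show ?case by (simp add: nil_zero)
next
  case empty then show ?case by (simp add: nil_zero)
next
  case (insert x F) then show ?case by (simp add: nil_add assms(1))
qed

lemma pow_add_split: "\<exists>r. ((x::'a::comm_semiring_1) + y) ^ k = x ^ k + r"
proof (induction k)
  case 0 show ?case by (rule exI[of _ 0]) simp
next
  case (Suc k)
  then obtain r where r: "(x + y) ^ k = x ^ k + r" by blast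
  have "(x + y) ^ Suc k = x ^ Suc k + (x * r + y * x ^ k + y * r)"
    by (simp add: r distrib_left distrib_right add_ac)
  then show ?case by blast
qed

lemma nil_add_left:
  fixes x y :: "'a::comm_semiring_1"
  assumes idem: "\<forall>x::'a. x + x = x" and "nilpotent_elem (x + y)"
  shows "nilpotent_elem x"
proof -
  obtain k where k: "(x + y) ^ k = 0" using assms unfolding nilpotent_elem_def by blast
  obtain r where "(x + y) ^ k = x ^ k + r" using pow_add_split by blast
  then have "x ^ k + r = 0" using k by simp
  then have "x ^ k = 0" by (rule idem_zero_sum[OF idem])
  then show ?thesis unfolding nilpotent_elem_def by blast
qed

lemma nil_sum_elem:
  fixes f :: "'b \<Rightarrow> 'a::comm_semiring_1"
  assumes idem: "\<forall>x::'a. x + x = x" and "finite A" "i \<in> A" "nilpotent_elem (sum f A)"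
  shows "nilpotent_elem (f i)"
proof -
  have "sum f A = f i + sum f (A - {i})" using assms by (simp add: sum.remove)
  then have "nilpotent_elem (f i + sum f (A - {i}))" using assms(4) by simp
  then show ?thesis by (rule nil_add_left[OF idem])
qed

definition mnm :: "'a::comm_semiring_1 \<Rightarrow> ('n \<Rightarrow> int) \<Rightarrow> (('n \<Rightarrow> int) \<Rightarrow> 'a)" where
  "mnm a p = (\<lambda>m. if m = p then a else 0)"

definition csum :: "(('n \<Rightarrow> int) \<Rightarrow> 'a::comm_semiring_1) \<Rightarrow> 'a" where
  "csum f = sum f (supp f)"

lemma pair_lat_add: "pair (lat (\<lambda>i. p i + q i)) v = pair (lat p) v + pair (lat q) v"
  unfolding pair_def lat_def by (simp add: sum.distrib distrib_right)

lemma pair_lat_zero: "pair (lat (\<lambda>_. 0)) v = 0"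
  unfolding pair_def lat_def by simp

lemma dm_zero: "(\<lambda>_. 0) \<in> dual_monoid \<sigma>"
  unfolding dual_monoid_def dual_cone_def by (simp add: pair_lat_zero)

lemma dm_add: "p \<in> dual_monoid \<sigma> \<Longrightarrow> q \<in> dual_monoid \<sigma> \<Longrightarrow> (\<lambda>i. p i + q i) \<in> dual_monoid \<sigma>"
  unfolding dual_monoid_def dual_cone_def by (simp add: pair_lat_add)

lemma dm_anti: "\<sigma>' \<subseteq> \<sigma> \<Longrightarrow> dual_monoid \<sigma> \<subseteq> dual_monoid \<sigma>'"
  unfolding dual_monoid_def dual_cone_def by auto

lemma coord_anti: "\<sigma>' \<subseteq> \<sigma> \<Longrightarrow> coord \<sigma> \<subseteq> (coord \<sigma>' :: (('n::finite \<Rightarrow> int) \<Rightarrow> 'a::comm_semiring_1) set)"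
  proof -
  assume "\<sigma>' \<subseteq> \<sigma>"
  then have "dual_monoid \<sigma> \<subseteq> dual_monoid \<sigma>'" by (rule dm_anti)
  then show ?thesis unfolding coord_def monoid_semiring_def by auto
qed

lemma supp_mnm: "supp (mnm a p) \<subseteq> {p}"
  unfolding supp_def mnm_def by auto

lemma mnm_coord: "p \<in> dual_monoid \<sigma> \<Longrightarrow> mnm a p \<in> coord \<sigma>"
proof -
  assume p: "p \<in> dual_monoid \<sigma>"
  have "finite (supp (mnm a p))" using supp_mnm[of a p] finite_subset by blast
  then show ?thesis using p supp_mnm[of a p] unfolding coord_def monoid_semiring_def by auto
qed

lemma mnm_zero: "mnm 0 p = (\<lambda>_. 0)"
  unfolding mnm_def by auto

lemma zero_coord: "(\<lambda>_. 0) \<in> coord \<sigma>"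
  unfolding coord_def monoid_semiring_def supp_def by simp

lemma sum_sub_single:
  assumes "I \<subseteq> {x}"
  shows "sum F I = (if x \<in> I then F x else 0)"
proof (cases "x \<in> I")
  case True then have "I = {x}" using assms by auto
  then show ?thesis by simp
next
  case False then have "I = {}" using assms by auto
  then show ?thesis using False by simp
qed

lemma pmult_shift_left:
  "pmult (mnm b u) f m = b * f (\<lambda>i. m i - u i)"
proof -
  let ?I = "{p. mnm b u (fst p) \<noteq> 0 \<and> f (snd p) \<noteq> 0 \<and> (\<lambda>i. fst p i + snd p i) = m}"
  have sub: "?I \<subseteq> {(u, \<lambda>i. m i - u i)}"
  proof
    fix p assume "p \<in> ?I"
    then have "fst p = u" "(\<lambda>i. fst p i + snd p i) = m" by (auto simp: mnm_def split: if_splits)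
    then have "snd p = (\<lambda>i. m i - u i)" by auto
    with \<open>fst p = u\<close> show "p \<in> {(u, \<lambda>i. m i - u i)}" by (cases p) auto
  qed
  have mem: "(u, \<lambda>i. m i - u i) \<in> ?I \<longleftrightarrow> b \<noteq> 0 \<and> f (\<lambda>i. m i - u i) \<noteq> 0"
    by (simp add: mnm_def)
  show ?thesis unfolding pmult_def
    by (subst sum_sub_single[OF sub]) (use mem in \<open>auto simp: mnm_def\<close>)
qed

lemma pmult_shift_right:
  "pmult f (mnm b u) m = f (\<lambda>i. m i - u i) * b"
proof -
  let ?I = "{p. f (fst p) \<noteq> 0 \<and> mnm b u (snd p) \<noteq> 0 \<and> (\<lambda>i. fst p i + snd p i) = m}"
  have sub: "?I \<subseteq> {(\<lambda>i. m i - u i, u)}"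
  proof
    fix p assume "p \<in> ?I"
    then have "snd p = u" "(\<lambda>i. fst p i + snd p i) = m" by (auto simp: mnm_def split: if_splits)
    then have "fst p = (\<lambda>i. m i - u i)" by auto
    with \<open>snd p = u\<close> show "p \<in> {(\<lambda>i. m i - u i, u)}" by (cases p) auto
  qed
  have mem: "(\<lambda>i. m i - u i, u) \<in> ?I \<longleftrightarrow> b \<noteq> 0 \<and> f (\<lambda>i. m i - u i) \<noteq> 0"
    by (auto simp add: mnm_def)
  show ?thesis unfolding pmult_def
    by (subst sum_sub_single[OF sub]) (use mem in \<open>auto simp: mnm_def\<close>)
qed

lemma pmult_index_eq:
  "{p. f (fst p) \<noteq> 0 \<and> g (snd p) \<noteq> 0 \<and> (\<lambda>i. fst p i + snd p i) = m} =
   {x. x \<in> supp f \<times> supp g \<and> (\<lambda>(p, q). (\<lambda>i. p i + q i)) x = m}"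
  unfolding supp_def by auto

lemma pmult_supp:
  "supp (pmult f g) \<subseteq> (\<lambda>(p, q). (\<lambda>i. p i + q i)) ` (supp f \<times> supp g)"
proof
  fix m assume m: "m \<in> supp (pmult f g)"
  show "m \<in> (\<lambda>(p, q). (\<lambda>i. p i + q i)) ` (supp f \<times> supp g)"
  proof (rule ccontr)
    assume nm: "m \<notin> (\<lambda>(p, q). (\<lambda>i. p i + q i)) ` (supp f \<times> supp g)"
    have "{x. x \<in> supp f \<times> supp g \<and> (\<lambda>(p, q). (\<lambda>i. p i + q i)) x = m} = {}"
      using nm by force
    then have "pmult f g m = 0" unfolding pmult_def pmult_index_eq by (simp only: sum.empty)
    then show False using m unfolding supp_def by simp
  qed
qed

lemma pmult_coord:
  assumes "f \<in> coord \<sigma>" "g \<in> coord \<sigma>"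
  shows "pmult f g \<in> coord \<sigma>"
proof -
  have ff: "finite (supp f)" "supp f \<subseteq> dual_monoid \<sigma>" and fg: "finite (supp g)" "supp g \<subseteq> dual_monoid \<sigma>"
    using assms unfolding coord_def monoid_semiring_def by auto
  have "(\<lambda>(p, q). (\<lambda>i. p i + q i)) ` (supp f \<times> supp g) \<subseteq> dual_monoid \<sigma>"
  proof
    fix x assume "x \<in> (\<lambda>(p, q). (\<lambda>i. p i + q i)) ` (supp f \<times> supp g)"
    then obtain p q where "p \<in> supp f" "q \<in> supp g" "x = (\<lambda>i. p i + q i)" by auto
    then show "x \<in> dual_monoid \<sigma>" using ff(2) fg(2) dm_add by blast
  qed
  moreover have "finite ((\<lambda>(p, q). (\<lambda>i. p i + q i)) ` (supp f \<times> supp g))"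
    using ff(1) fg(1) by simp
  ultimately show ?thesis using pmult_supp[of f g] finite_subset[OF pmult_supp[of f g]]
    unfolding coord_def monoid_semiring_def by auto
qed

lemma padd_coord:
  assumes "f \<in> coord \<sigma>" "g \<in> coord \<sigma>"
  shows "padd f g \<in> coord \<sigma>"
proof -
  have s: "supp (padd f g) \<subseteq> supp f \<union> supp g" unfolding supp_def padd_def by auto
  have "finite (supp f \<union> supp g)" using assms unfolding coord_def monoid_semiring_def by auto
  then have "finite (supp (padd f g))" using s finite_subset by blast
  then show ?thesis using assms s unfolding coord_def monoid_semiring_def by auto
qed

lemma csum_pmult:
  fixes f g :: "('n \<Rightarrow> int) \<Rightarrow> 'a::comm_semiring_1"
  assumes "finite (supp f)" "finite (supp g)"
  shows "csum (pmult f g) = csum f * csum g"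
proof -
  let ?S = "supp f \<times> supp g"
  let ?h = "(\<lambda>(p, q). (\<lambda>i. p i + q i)) :: ('n \<Rightarrow> int) \<times> ('n \<Rightarrow> int) \<Rightarrow> ('n \<Rightarrow> int)"
  let ?T = "?h ` ?S"
  have fS: "finite ?S" using assms by simp
  have fT: "finite ?T" using fS by simp
  have "csum (pmult f g) = sum (pmult f g) ?T"
    unfolding csum_def
    by (rule sum.mono_neutral_left[OF fT pmult_supp]) (auto simp: supp_def)
  also have "\<dots> = (\<Sum>m\<in>?T. sum (\<lambda>p. f (fst p) * g (snd p)) {x. x \<in> ?S \<and> ?h x = m})"
    unfolding pmult_def pmult_index_eq by simp
  also have "\<dots> = sum (\<lambda>p. f (fst p) * g (snd p)) ?S"
    by (rule sum.group[OF fS fT]) simp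
  also have "\<dots> = csum f * csum g"
    unfolding csum_def sum_product sum.cartesian_product by (simp add: case_prod_beta)
  finally show ?thesis .
qed

definition gen :: "('n::finite \<Rightarrow> real) set \<Rightarrow> (('n \<Rightarrow> int) \<Rightarrow> 'a::comm_semiring_1) set" where
  "gen \<sigma> = {f \<in> coord \<sigma>. \<forall>m. nilpotent_elem (f m)}"

lemma coord_finite: "f \<in> coord \<sigma> \<Longrightarrow> finite (supp f)"
  unfolding coord_def monoid_semiring_def by auto

lemma coord_supp: "f \<in> coord \<sigma> \<Longrightarrow> supp f \<subseteq> dual_monoid \<sigma>"
  unfolding coord_def monoid_semiring_def by auto

lemma nil_csum_iff:
  fixes f :: "('n \<Rightarrow> int) \<Rightarrow> 'a::comm_semiring_1"
  assumes idem: "\<forall>x::'a. x + x = x" and fin: "finite (supp f)"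
  shows "nilpotent_elem (csum f) \<longleftrightarrow> (\<forall>m. nilpotent_elem (f m))"
proof
  assume h: "nilpotent_elem (csum f)"
  show "\<forall>m. nilpotent_elem (f m)"
  proof
    fix m show "nilpotent_elem (f m)"
    proof (cases "m \<in> supp f")
      case True then show ?thesis using nil_sum_elem[OF idem fin True, of f] h unfolding csum_def by simp
    next
      case False then have "f m = 0" unfolding supp_def by simp
      then show ?thesis by (simp add: nil_zero)
    qed
  qed
next
  assume "\<forall>m. nilpotent_elem (f m)"
  then show "nilpotent_elem (csum f)" unfolding csum_def by (intro nil_sum[OF idem]) simp
qed

lemma pmult_coeff_nil:
  fixes a x :: "('n \<Rightarrow> int) \<Rightarrow> 'a::comm_semiring_1"
  assumes idem: "\<forall>x::'a. x + x = x" and "\<forall>m. nilpotent_elem (x m)"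
  shows "nilpotent_elem (pmult a x m)"
  unfolding pmult_def
  by (rule nil_sum[OF idem], rule ballI, rule nil_mult2, use assms(2) in blast)

lemma gen_ideal:
  assumes idem: "\<forall>x::'a. x + x = x"
  shows "semiring_ideal (coord \<sigma>) (gen \<sigma> :: (('n::finite \<Rightarrow> int) \<Rightarrow> 'a::comm_semiring_1) set)"
  unfolding semiring_ideal_def
proof (intro conjI ballI)
  show "gen \<sigma> \<subseteq> coord \<sigma>" unfolding gen_def by auto
  show "(\<lambda>_. 0) \<in> (gen \<sigma> :: (('n \<Rightarrow> int) \<Rightarrow> 'a) set)" unfolding gen_def using zero_coord nil_zero by auto
next
  fix x y :: "('n \<Rightarrow> int) \<Rightarrow> 'a" assume "x \<in> gen \<sigma>" "y \<in> gen \<sigma>"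
  then have "x \<in> coord \<sigma>" "y \<in> coord \<sigma>" "\<forall>m. nilpotent_elem (x m)" "\<forall>m. nilpotent_elem (y m)"
    unfolding gen_def by auto
  then show "padd x y \<in> gen \<sigma>" unfolding gen_def using padd_coord[of x \<sigma> y] nil_add
    by (auto simp: padd_def)
next
  fix a x :: "('n \<Rightarrow> int) \<Rightarrow> 'a" assume a: "a \<in> coord \<sigma>" and x: "x \<in> gen \<sigma>"
  then show "pmult a x \<in> gen \<sigma>" unfolding gen_def using pmult_coord pmult_coeff_nil[OF idem]
    by auto
qed

lemma gen_spec:
  assumes idem: "\<forall>x::'a. x + x = x"
    and irr: "\<forall>x y::'a. nilpotent_elem (x * y) \<longrightarrow> nilpotent_elem x \<or> nilpotent_elem y"
  shows "(gen \<sigma> :: (('n::finite \<Rightarrow> int) \<Rightarrow> 'a::comm_semiring_1) set) \<in> spec (coord \<sigma>)"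
  unfolding spec_def prime_ideal_def mem_Collect_eq
proof (intro conjI ballI impI)
  show "semiring_ideal (coord \<sigma>) (gen \<sigma> :: (('n \<Rightarrow> int) \<Rightarrow> 'a) set)" by (rule gen_ideal[OF idem])
  have "mnm (1::'a) (\<lambda>_. 0) \<in> coord \<sigma>" by (rule mnm_coord[OF dm_zero])
  moreover have "mnm (1::'a) (\<lambda>_. 0) (\<lambda>_. 0) = 1" by (simp add: mnm_def)
  then have "mnm (1::'a) (\<lambda>_. 0) \<notin> gen \<sigma>" unfolding gen_def
    using nil_one by (metis (mono_tags, lifting) mem_Collect_eq)
  ultimately show "(gen \<sigma> :: (('n \<Rightarrow> int) \<Rightarrow> 'a) set) \<noteq> coord \<sigma>" by blast
next
  fix a b :: "('n \<Rightarrow> int) \<Rightarrow> 'a"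
  assume a: "a \<in> coord \<sigma>" and b: "b \<in> coord \<sigma>" and ab: "pmult a b \<in> gen \<sigma>"
  have fa: "finite (supp a)" and fb: "finite (supp b)" using a b coord_finite by auto
  have "finite (supp (pmult a b))" using pmult_coord[OF a b] coord_finite by auto
  then have "nilpotent_elem (csum (pmult a b))" using ab nil_csum_iff[OF idem] unfolding gen_def by blast
  then have "nilpotent_elem (csum a * csum b)" using csum_pmult[OF fa fb] by simp
  then have "nilpotent_elem (csum a) \<or> nilpotent_elem (csum b)" using irr by blast
  then show "a \<in> gen \<sigma> \<or> b \<in> gen \<sigma>" using nil_csum_iff[OF idem fa] nil_csum_iff[OF idem fb] a b
    unfolding gen_def by blast
qed

definition smul :: "nat \<Rightarrow> ('n \<Rightarrow> int) \<Rightarrow> ('n \<Rightarrow> int)" where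
  "smul j p = (\<lambda>i. int j * p i)"

lemma dm_smul: "p \<in> dual_monoid \<sigma> \<Longrightarrow> smul j p \<in> dual_monoid \<sigma>"
proof (induction j)
  case 0 then show ?case using dm_zero by (simp add: smul_def)
next
  case (Suc j)
  have "smul (Suc j) p = (\<lambda>i. p i + smul j p i)" by (auto simp: smul_def algebra_simps)
  then show ?case using dm_add[OF Suc.prems Suc.IH[OF Suc.prems]] by simp
qed

lemma mnm_pow:
  "mnm (a ^ Suc j) (smul (Suc j) p) = pmult (mnm (a::'a::comm_semiring_1) p) (mnm (a ^ j) (smul j p))"
proof
  fix m
  have eq: "((\<lambda>i. m i - p i) = smul j p) \<longleftrightarrow> (m = smul (Suc j) p)"
    by (auto simp: smul_def fun_eq_iff algebra_simps)
  show "mnm (a ^ Suc j) (smul (Suc j) p) m = pmult (mnm a p) (mnm (a ^ j) (smul j p)) m"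
    unfolding pmult_shift_left using eq by (auto simp: mnm_def)
qed

lemma prime_no_one:
  assumes Q: "Q \<in> spec (coord \<sigma>)"
  shows "mnm (1::'a::comm_semiring_1) (\<lambda>_. 0) \<notin> (Q :: (('n::finite \<Rightarrow> int) \<Rightarrow> 'a) set)"
proof
  assume one: "mnm (1::'a) (\<lambda>_. 0) \<in> Q"
  have id: "semiring_ideal (coord \<sigma>) Q" and ne: "Q \<noteq> coord \<sigma>" using Q unfolding spec_def prime_ideal_def by auto
  have "coord \<sigma> \<subseteq> Q"
  proof
    fix f :: "('n \<Rightarrow> int) \<Rightarrow> 'a" assume f: "f \<in> coord \<sigma>"
    have "pmult f (mnm (1::'a) (\<lambda>_. 0)) \<in> Q" using id f one unfolding semiring_ideal_def by blast
    moreover have "pmult f (mnm (1::'a) (\<lambda>_. 0)) = f" by (simp add: pmult_shift_right fun_eq_iff)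
    ultimately show "f \<in> Q" by simp
  qed
  moreover have "Q \<subseteq> coord \<sigma>" using id unfolding semiring_ideal_def by auto
  ultimately show False using ne by blast
qed

lemma mnm_in_prime:
  assumes Q: "Q \<in> spec (coord \<sigma>)" and p: "p \<in> dual_monoid \<sigma>" and a: "nilpotent_elem (a::'a::comm_semiring_1)"
  shows "mnm a p \<in> (Q :: (('n::finite \<Rightarrow> int) \<Rightarrow> 'a) set)"
proof -
  have id: "semiring_ideal (coord \<sigma>) Q" and pr: "\<forall>x\<in>coord \<sigma>. \<forall>y\<in>coord \<sigma>. pmult x y \<in> Q \<longrightarrow> x \<in> Q \<or> y \<in> Q"
    using Q unfolding spec_def prime_ideal_def by auto
  have step: "mnm (a ^ j) (smul j p) \<in> Q \<Longrightarrow> mnm a p \<in> Q" for j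
  proof (induction j)
    case 0
    have "smul 0 p = (\<lambda>_. 0)" by (simp add: smul_def)
    then show ?case using 0 prime_no_one[OF Q] by simp
  next
    case (Suc j)
    have "pmult (mnm a p) (mnm (a ^ j) (smul j p)) \<in> Q" using Suc.prems mnm_pow by metis
    moreover have "mnm a p \<in> coord \<sigma>" "mnm (a ^ j) (smul j p) \<in> coord \<sigma>"
      using mnm_coord[OF p] mnm_coord[OF dm_smul[OF p]] by auto
    ultimately show ?case using pr Suc.IH by blast
  qed
  obtain k where k: "a ^ k = 0" using a unfolding nilpotent_elem_def by blast
  have "mnm (a ^ k) (smul k p) \<in> Q" using k id unfolding semiring_ideal_def by (simp add: mnm_zero)
  then show ?thesis by (rule step)
qed

lemma gen_minimal:
  assumes Q: "Q \<in> spec (coord \<sigma>)"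
  shows "(gen \<sigma> :: (('n::finite \<Rightarrow> int) \<Rightarrow> 'a::comm_semiring_1) set) \<subseteq> Q"
proof -
  have id: "semiring_ideal (coord \<sigma>) Q" using Q unfolding spec_def prime_ideal_def by auto
  have main: "finite F \<Longrightarrow> \<forall>f. supp f \<subseteq> F \<and> f \<in> coord \<sigma> \<and> (\<forall>m. nilpotent_elem (f m)) \<longrightarrow> f \<in> Q" for F
  proof (induction F rule: finite_induct)
    case empty
    show ?case
    proof (intro allI impI)
      fix f :: "('n \<Rightarrow> int) \<Rightarrow> 'a" assume "supp f \<subseteq> {} \<and> f \<in> coord \<sigma> \<and> (\<forall>m. nilpotent_elem (f m))"
      then have "f = (\<lambda>_. 0)" unfolding supp_def by auto
      then show "f \<in> Q" using id unfolding semiring_ideal_def by simp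
    qed
  next
    case (insert x F)
    show ?case
    proof (intro allI impI)
      fix f :: "('n \<Rightarrow> int) \<Rightarrow> 'a" assume prem: "supp f \<subseteq> insert x F \<and> f \<in> coord \<sigma> \<and> (\<forall>m. nilpotent_elem (f m))"
      then have p1: "supp f \<subseteq> insert x F" and p2: "f \<in> coord \<sigma>" and p3: "\<forall>m. nilpotent_elem (f m)" by auto
      let ?g = "f(x := 0)"
      have sg: "supp ?g \<subseteq> F" using p1 unfolding supp_def by auto
      have sgf: "supp ?g \<subseteq> supp f" unfolding supp_def by auto
      have "finite (supp ?g)" using finite_subset[OF sgf coord_finite[OF p2]] .
      then have gc: "?g \<in> coord \<sigma>" using sgf coord_supp[OF p2] unfolding coord_def monoid_semiring_def
        by auto
      have "\<forall>m. nilpotent_elem (?g m)" using p3 nil_zero by auto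
      then have gQ: "?g \<in> Q" using insert.IH sg gc by blast
      have mQ: "mnm (f x) x \<in> Q"
      proof (cases "f x = 0")
        case True then show ?thesis using id unfolding semiring_ideal_def by (simp add: mnm_zero)
      next
        case False
        then have "x \<in> dual_monoid \<sigma>" using coord_supp[OF p2] unfolding supp_def by auto
        then show ?thesis using mnm_in_prime[OF Q] p3 by blast
      qed
      have "f = padd (mnm (f x) x) ?g" unfolding padd_def mnm_def by (rule ext) auto
      moreover have "padd (mnm (f x) x) ?g \<in> Q" using id mQ gQ unfolding semiring_ideal_def by blast
      ultimately show "f \<in> Q" by simp
    qed
  qed
  show ?thesis
  proof
    fix f assume "f \<in> (gen \<sigma> :: (('n \<Rightarrow> int) \<Rightarrow> 'a) set)"
    then have "f \<in> coord \<sigma>" "\<forall>m. nilpotent_elem (f m)" unfolding gen_def by auto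
    then show "f \<in> Q" using main[OF coord_finite] by blast
  qed
qed

lemma pair_lat_zero_right: "pair x (lat (\<lambda>_. 0)) = 0"
  unfolding pair_def lat_def by simp

lemma lat_eq_zero: "lat g = (\<lambda>_. 0) \<longleftrightarrow> g = (\<lambda>_. 0)"
  unfolding lat_def by (auto simp: fun_eq_iff)

lemma cone_gen_single:
  assumes "g0 \<in> G" "finite G"
  shows "lat g0 \<in> cone_gen G"
  unfolding cone_gen_def mem_Collect_eq
proof (intro exI[of _ "\<lambda>g. if g = g0 then 1 else 0"] conjI)
  show "\<forall>g\<in>G. 0 \<le> (if g = g0 then 1 else (0::real))" by simp
  show "lat g0 = (\<lambda>i. \<Sum>g\<in>G. (if g = g0 then 1 else 0) * real_of_int (g i))"
  proof
    fix i
    have "(\<Sum>g\<in>G. (if g = g0 then 1 else 0) * real_of_int (g i)) = (\<Sum>g\<in>G. if g = g0 then real_of_int (g i) else 0)"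
      by (rule sum.cong) auto
    also have "\<dots> = real_of_int (g0 i)" using assms by (simp add: sum.delta)
    finally show "lat g0 i = (\<Sum>g\<in>G. (if g = g0 then 1 else 0) * real_of_int (g i))" by (simp add: lat_def)
  qed
qed

lemma gordan:
  fixes G :: "('n::finite \<Rightarrow> int) set"
  assumes fin: "finite G" and sc: "strongly_convex (cone_gen G)"
  shows "\<exists>c. \<forall>g\<in>G. g \<noteq> (\<lambda>_. 0) \<longrightarrow> pair c (lat g) > 0"
proof -
  define G1 where "G1 = {g\<in>G. g \<noteq> (\<lambda>_. 0)}"
  have fG1: "finite G1" using fin unfolding G1_def by simp
  define \<phi> :: "('n \<Rightarrow> int) \<Rightarrow> real^'n" where "\<phi> g = (\<chi> i. real_of_int (g i))" for g
  have inj: "inj_on \<phi> G1" unfolding inj_on_def \<phi>_def by (auto simp: vec_eq_iff fun_eq_iff)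
  define S where "S = convex hull (\<phi> ` G1)"
  have cvx: "convex S" unfolding S_def by simp
  have cl: "closed S" unfolding S_def
    by (intro compact_imp_closed compact_convex_hull finite_imp_compact) (use fG1 in simp)
  have n0: "0 \<notin> S"
  proof
    assume "0 \<in> S"
    then obtain u where u0: "\<forall>x\<in>\<phi> ` G1. 0 \<le> u x" and u1: "sum u (\<phi> ` G1) = 1"
      and u2: "(\<Sum>x\<in>\<phi> ` G1. u x *\<^sub>R x) = 0"
      unfolding S_def convex_hull_finite[OF finite_imageI[OF fG1]] by auto
    define l where "l g = u (\<phi> g)" for g
    have l0: "\<forall>g\<in>G1. 0 \<le> l g" using u0 unfolding l_def by auto
    have l1: "sum l G1 = 1" using u1 unfolding l_def sum.reindex[OF inj] by simp
    have "(\<Sum>g\<in>G1. l g *\<^sub>R \<phi> g) = 0" using u2 unfolding l_def sum.reindex[OF inj] by simp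
    then have "(\<Sum>g\<in>G1. l g *\<^sub>R \<phi> g) $ i = (0::real^'n) $ i" for i by simp
    then have l2: "(\<Sum>g\<in>G1. l g * real_of_int (g i)) = 0" for i
      by (simp add: \<phi>_def)
    have "\<exists>g\<in>G1. l g > 0"
    proof (rule ccontr)
      assume "\<not> (\<exists>g\<in>G1. l g > 0)"
      then have "\<forall>g\<in>G1. l g \<le> 0" by (simp add: not_less)
      then have "sum l G1 \<le> 0" by (intro sum_nonpos) simp
      then show False using l1 by simp
    qed
    then obtain g0 where g0: "g0 \<in> G1" "l g0 > 0" by blast
    have g0G: "g0 \<in> G" and g0n: "g0 \<noteq> (\<lambda>_. 0)" using g0 unfolding G1_def by auto
    have pos: "lat g0 \<in> cone_gen G" by (rule cone_gen_single[OF g0G fin])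
    have neg: "(\<lambda>i. - lat g0 i) \<in> cone_gen G"
      unfolding cone_gen_def mem_Collect_eq
    proof (intro exI[of _ "\<lambda>g. if g \<in> G1 \<and> g \<noteq> g0 then l g / l g0 else 0"] conjI)
      show "\<forall>g\<in>G. 0 \<le> (if g \<in> G1 \<and> g \<noteq> g0 then l g / l g0 else 0)"
        using l0 g0 by auto
      show "(\<lambda>i. - lat g0 i) = (\<lambda>i. \<Sum>g\<in>G. (if g \<in> G1 \<and> g \<noteq> g0 then l g / l g0 else 0) * real_of_int (g i))"
      proof
        fix i
        have "(\<Sum>g\<in>G. (if g \<in> G1 \<and> g \<noteq> g0 then l g / l g0 else 0) * real_of_int (g i))
            = (\<Sum>g\<in>G1 - {g0}. l g / l g0 * real_of_int (g i))"
        proof -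
          have "(\<Sum>g\<in>G. (if g \<in> G1 \<and> g \<noteq> g0 then l g / l g0 else 0) * real_of_int (g i))
              = (\<Sum>g\<in>G. (if g \<in> G1 - {g0} then l g / l g0 * real_of_int (g i) else 0))"
            by (rule sum.cong) auto
          also have "\<dots> = (\<Sum>g\<in>G \<inter> (G1 - {g0}). l g / l g0 * real_of_int (g i))"
            by (simp only: sum.inter_restrict[OF fin])
          also have "G \<inter> (G1 - {g0}) = G1 - {g0}" unfolding G1_def by auto
          finally show ?thesis .
        qed
        also have "\<dots> = (\<Sum>g\<in>G1 - {g0}. l g * real_of_int (g i)) / l g0"
          by (simp add: sum_divide_distrib)
        also have "(\<Sum>g\<in>G1 - {g0}. l g * real_of_int (g i)) = - (l g0 * real_of_int (g0 i))"
          using l2[of i] sum.remove[OF fG1 g0(1), of "\<lambda>g. l g * real_of_int (g i)"] by simp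
        finally show "- lat g0 i = (\<Sum>g\<in>G. (if g \<in> G1 \<and> g \<noteq> g0 then l g / l g0 else 0) * real_of_int (g i))"
          using g0(2) by (simp add: lat_def)
      qed
    qed
    have "lat g0 = (\<lambda>_. 0)" using sc pos neg unfolding strongly_convex_def by blast
    then show False using g0n lat_eq_zero by blast
  qed
  obtain a b where ab: "0 < b" "\<forall>x\<in>S. inner a x > b"
    using separating_hyperplane_closed_0[OF cvx cl n0] by blast
  show ?thesis
  proof (intro exI[of _ "\<lambda>i. a $ i"] ballI impI)
    fix g assume "g \<in> G" "g \<noteq> (\<lambda>_. 0)"
    then have "g \<in> G1" unfolding G1_def by auto
    then have "\<phi> g \<in> S" unfolding S_def by (intro hull_inc) simp
    then have "inner a (\<phi> g) > b" using ab(2) by blast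
    then have "inner a (\<phi> g) > 0" using ab(1) by linarith
    moreover have "inner a (\<phi> g) = pair (\<lambda>i. a $ i) (lat g)"
      unfolding inner_vec_def pair_def lat_def \<phi>_def by simp
    ultimately show "pair (\<lambda>i. a $ i) (lat g) > 0" by simp
  qed
qed

lemma floor_mult_bound: "real_of_int (floor y) * z \<ge> y * z - \<bar>z\<bar>"
proof -
  have d0: "0 \<le> y - floor y" and d1: "y - floor y < 1" by linarith+
  have "(y - floor y) * z \<le> \<bar>(y - floor y) * z\<bar>" by simp
  also have "\<dots> = (y - floor y) * \<bar>z\<bar>" using d0 by (simp add: abs_mult)
  also have "\<dots> \<le> 1 * \<bar>z\<bar>" using d1 by (intro mult_right_mono) auto
  finally show ?thesis by (simp add: algebra_simps)
qed

lemma int_pos: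
  fixes G :: "('n::finite \<Rightarrow> int) set"
  assumes fin: "finite G" and c: "\<forall>g\<in>G. g \<noteq> (\<lambda>_. 0) \<longrightarrow> pair c (lat g) > 0"
  shows "\<exists>w. \<forall>g\<in>G. g \<noteq> (\<lambda>_. 0) \<longrightarrow> pair (lat w) (lat g) \<ge> 1"
proof -
  define G1 where "G1 = {g\<in>G. g \<noteq> (\<lambda>_. 0)}"
  have fG1: "finite G1" using fin unfolding G1_def by simp
  define t where "t g = (1 + (\<Sum>i\<in>UNIV. \<bar>real_of_int (g i)\<bar>)) / pair c (lat g)" for g
  define K where "K = (\<Sum>g\<in>G1. t g)"
  have tpos: "t g \<ge> 0" if "g \<in> G1" for g
    using c that unfolding t_def G1_def by (auto intro!: divide_nonneg_pos add_nonneg_nonneg sum_nonneg)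
  define w where "w i = floor (K * c i)" for i
  show ?thesis
  proof (intro exI[of _ w] ballI impI)
    fix g assume gG: "g \<in> G" and gn: "g \<noteq> (\<lambda>_. 0)"
    then have g1: "g \<in> G1" unfolding G1_def by simp
    have pg: "pair c (lat g) > 0" using c gG gn by blast
    have "t g \<le> K" unfolding K_def by (rule member_le_sum[OF g1]) (use tpos fG1 in auto)
    then have "t g * pair c (lat g) \<le> K * pair c (lat g)" using pg by (intro mult_right_mono) auto
    then have Kb: "1 + (\<Sum>i\<in>UNIV. \<bar>real_of_int (g i)\<bar>) \<le> K * pair c (lat g)"
      unfolding t_def using pg by simp
    have "pair (lat w) (lat g) = (\<Sum>i\<in>UNIV. real_of_int (w i) * real_of_int (g i))"
      unfolding pair_def lat_def by simp
    also have "\<dots> \<ge> (\<Sum>i\<in>UNIV. K * c i * real_of_int (g i) - \<bar>real_of_int (g i)\<bar>)"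
      unfolding w_def by (intro sum_mono floor_mult_bound)
    finally have "pair (lat w) (lat g) \<ge> K * pair c (lat g) - (\<Sum>i\<in>UNIV. \<bar>real_of_int (g i)\<bar>)"
      unfolding sum_subtractf pair_def lat_def by (simp add: sum_distrib_left mult.assoc)
    then show "pair (lat w) (lat g) \<ge> 1" using Kb by linarith
  qed
qed

lemma dual_gen:
  fixes G :: "('n::finite \<Rightarrow> int) set"
  assumes fin: "finite G" and x: "\<forall>g\<in>G. pair x (lat g) \<ge> 0"
  shows "x \<in> dual_cone (cone_gen G)"
  unfolding dual_cone_def mem_Collect_eq
proof
  fix v assume "v \<in> cone_gen G"
  then obtain cc where cc: "\<forall>g\<in>G. cc g \<ge> 0" and v: "v = (\<lambda>i. \<Sum>g\<in>G. cc g * real_of_int (g i))"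
    unfolding cone_gen_def by auto
  have "pair x v = (\<Sum>i\<in>UNIV. \<Sum>g\<in>G. x i * (cc g * real_of_int (g i)))"
    unfolding pair_def v by (simp add: sum_distrib_left)
  also have "\<dots> = (\<Sum>g\<in>G. cc g * pair x (lat g))"
    unfolding pair_def lat_def by (subst sum.swap) (simp add: sum_distrib_left algebra_simps)
  also have "\<dots> \<ge> 0" using cc x by (intro sum_nonneg mult_nonneg_nonneg) auto
  finally show "pair x v \<ge> 0" .
qed

lemma pair_lat_smul: "pair (lat (\<lambda>i. int n * w i)) v = real n * pair (lat w) v"
  unfolding pair_def lat_def by (simp add: sum_distrib_left algebra_simps)

lemma shift_exists:
  fixes G :: "('n::finite \<Rightarrow> int) set"
  assumes fin: "finite G" and sc: "strongly_convex (cone_gen G)" and fF: "finite F"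
  shows "\<exists>u \<in> dual_monoid (cone_gen G). \<forall>m\<in>F. (\<lambda>i. u i + m i) \<in> dual_monoid (cone_gen G)"
proof -
  obtain c where "\<forall>g\<in>G. g \<noteq> (\<lambda>_. 0) \<longrightarrow> pair c (lat g) > 0" using gordan[OF fin sc] by blast
  then obtain w where w: "\<forall>g\<in>G. g \<noteq> (\<lambda>_. 0) \<longrightarrow> pair (lat w) (lat g) \<ge> 1" using int_pos[OF fin] by blast
  define N where "N = (\<Sum>m\<in>F. \<Sum>g\<in>G. \<bar>pair (lat m) (lat g)\<bar>)"
  define n where "n = nat (ceiling N)"
  have nN: "real n \<ge> N" unfolding n_def by linarith
  define u where "u = (\<lambda>i. int n * w i)"
  have pu: "pair (lat u) (lat g) \<ge> real n" if "g \<in> G" "g \<noteq> (\<lambda>_. 0)" for g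
  proof -
    have "real n * 1 \<le> real n * pair (lat w) (lat g)" using w that by (intro mult_left_mono) auto
    then show ?thesis unfolding u_def pair_lat_smul by simp
  qed
  have u: "u \<in> dual_monoid (cone_gen G)"
    unfolding dual_monoid_def mem_Collect_eq
  proof (rule dual_gen[OF fin], rule ballI)
    fix g assume g: "g \<in> G"
    show "pair (lat u) (lat g) \<ge> 0"
    proof (cases "g = (\<lambda>_. 0)")
      case True then show ?thesis by (simp add: pair_lat_zero_right)
    next
      case False then show ?thesis using pu[OF g False] by linarith
    qed
  qed
  have "(\<lambda>i. u i + m i) \<in> dual_monoid (cone_gen G)" if m: "m \<in> F" for m
    unfolding dual_monoid_def mem_Collect_eq
  proof (rule dual_gen[OF fin], rule ballI)
    fix g assume g: "g \<in> G"
    show "pair (lat (\<lambda>i. u i + m i)) (lat g) \<ge> 0"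
    proof (cases "g = (\<lambda>_. 0)")
      case True then show ?thesis by (simp add: pair_lat_zero_right)
    next
      case False
      have "\<bar>pair (lat m) (lat g)\<bar> \<le> (\<Sum>g\<in>G. \<bar>pair (lat m) (lat g)\<bar>)"
        by (rule member_le_sum[OF g]) (auto simp: fin)
      also have "\<dots> \<le> N" unfolding N_def
        by (rule member_le_sum[OF m]) (auto simp: fF intro: sum_nonneg)
      finally have "\<bar>pair (lat m) (lat g)\<bar> \<le> real n" using nN by linarith
      moreover have "pair (lat (\<lambda>i. u i + m i)) (lat g) = pair (lat u) (lat g) + pair (lat m) (lat g)"
        unfolding pair_def lat_def by (simp add: sum.distrib distrib_right)
      ultimately show ?thesis using pu[OF g False] by linarith
    qed
  qed
  then show ?thesis using u by blast
qed

lemma gen_contract: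
  assumes "\<sigma>' \<subseteq> \<sigma>"
  shows "(gen \<sigma>' :: (('n::finite \<Rightarrow> int) \<Rightarrow> 'a::comm_semiring_1) set) \<inter> coord \<sigma> = gen \<sigma>"
proof -
  have "coord \<sigma> \<subseteq> (coord \<sigma>' :: (('n \<Rightarrow> int) \<Rightarrow> 'a) set)" by (rule coord_anti[OF assms])
  then show ?thesis unfolding gen_def by auto
qed

lemma class_eq:
  fixes \<Delta> :: "('n::finite \<Rightarrow> real) set set"
  assumes fan: "fan \<Delta>" and idem: "\<forall>x::'a::comm_semiring_1. x + x = x"
    and irr: "\<forall>x y::'a. nilpotent_elem (x * y) \<longrightarrow> nilpotent_elem x \<or> nilpotent_elem y"
    and \<tau>: "\<tau> \<in> \<Delta>"
  shows "glue_rel TYPE('a) \<Delta> `` {(\<tau>, gen \<tau>)} = (\<lambda>\<sigma>. (\<sigma>, gen \<sigma>)) ` \<Delta>"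
proof
  show "(\<lambda>\<sigma>. (\<sigma>, gen \<sigma>)) ` \<Delta> \<subseteq> glue_rel TYPE('a) \<Delta> `` {(\<tau>, gen \<tau>)}"
  proof
    fix x assume "x \<in> (\<lambda>\<sigma>. (\<sigma>, (gen \<sigma> :: (('n \<Rightarrow> int) \<Rightarrow> 'a) set))) ` \<Delta>"
    then obtain \<sigma> where \<sigma>: "\<sigma> \<in> \<Delta>" and x: "x = (\<sigma>, gen \<sigma>)" by blast
    have "gen (\<tau> \<inter> \<sigma>) \<in> spec (coord (\<tau> \<inter> \<sigma>) :: (('n \<Rightarrow> int) \<Rightarrow> 'a) set)" by (rule gen_spec[OF idem irr])
    moreover have "(gen \<tau> :: (('n \<Rightarrow> int) \<Rightarrow> 'a) set) = gen (\<tau> \<inter> \<sigma>) \<inter> coord \<tau>"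
      using gen_contract[of "\<tau> \<inter> \<sigma>" \<tau>] by auto
    moreover have "(gen \<sigma> :: (('n \<Rightarrow> int) \<Rightarrow> 'a) set) = gen (\<tau> \<inter> \<sigma>) \<inter> coord \<sigma>"
      using gen_contract[of "\<tau> \<inter> \<sigma>" \<sigma>] by auto
    moreover have "(gen \<tau> :: (('n \<Rightarrow> int) \<Rightarrow> 'a) set) \<in> spec (coord \<tau>)" by (rule gen_spec[OF idem irr])
    moreover have "(gen \<sigma> :: (('n \<Rightarrow> int) \<Rightarrow> 'a) set) \<in> spec (coord \<sigma>)" by (rule gen_spec[OF idem irr])
    ultimately show "x \<in> glue_rel TYPE('a) \<Delta> `` {(\<tau>, gen \<tau>)}"
      unfolding x glue_rel_def using \<tau> \<sigma> by blast
  qed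
next
  show "glue_rel TYPE('a) \<Delta> `` {(\<tau>, gen \<tau>)} \<subseteq> (\<lambda>\<sigma>. (\<sigma>, gen \<sigma>)) ` \<Delta>"
  proof
    fix x assume "x \<in> glue_rel TYPE('a) \<Delta> `` {(\<tau>, gen \<tau>)}"
    then obtain \<sigma> P where x: "x = (\<sigma>, P)" and rel: "((\<tau>, gen \<tau>), (\<sigma>, P)) \<in> glue_rel TYPE('a) \<Delta>"
      by (cases x) auto
    from rel obtain P' :: "(('n \<Rightarrow> int) \<Rightarrow> 'a) set" where \<sigma>: "\<sigma> \<in> \<Delta>" and P: "P \<in> spec (coord \<sigma>)"
      and P': "P' \<in> spec (coord (\<tau> \<inter> \<sigma>))" and e1: "gen \<tau> = P' \<inter> coord \<tau>" and e2: "P = P' \<inter> coord \<sigma>"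
      unfolding glue_rel_def by blast
    have idP': "semiring_ideal (coord (\<tau> \<inter> \<sigma>)) P'" using P' unfolding spec_def prime_ideal_def by auto
    obtain G where fG: "finite G" and \<tau>G: "\<tau> = cone_gen G" and sc: "strongly_convex \<tau>"
      using fan \<tau> unfolding fan_def rat_poly_cone_def by blast
    have "P = gen \<sigma>"
    proof
      show "P \<subseteq> gen \<sigma>"
      proof
        fix f assume fP: "f \<in> P"
        then have fP': "f \<in> P'" and fc: "f \<in> coord \<sigma>" using e2 by auto
        obtain u where u: "u \<in> dual_monoid \<tau>" and um: "\<forall>m\<in>supp f. (\<lambda>i. u i + m i) \<in> dual_monoid \<tau>"
          using shift_exists[OF fG sc[unfolded \<tau>G] coord_finite[OF fc]] \<tau>G by blast
        define h where "h = pmult (mnm (1::'a) u) f"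
        have hm: "h m = f (\<lambda>i. m i - u i)" for m unfolding h_def pmult_shift_left by simp
        have mc: "mnm (1::'a) u \<in> coord (\<tau> \<inter> \<sigma>)" using coord_anti[of "\<tau> \<inter> \<sigma>" \<tau>] mnm_coord[OF u] by blast
        have hP': "h \<in> P'" unfolding h_def using idP' mc fP' unfolding semiring_ideal_def by blast
        have sh: "supp h \<subseteq> (\<lambda>m. (\<lambda>i. u i + m i)) ` supp f"
        proof
          fix m assume "m \<in> supp h"
          then have "(\<lambda>i. m i - u i) \<in> supp f" unfolding supp_def hm by simp
          then show "m \<in> (\<lambda>m. (\<lambda>i. u i + m i)) ` supp f"
            using image_eqI[of m "\<lambda>m i. u i + m i" "\<lambda>i. m i - u i" "supp f"] by simp
        qed
        have "finite (supp h)" using finite_subset[OF sh finite_imageI[OF coord_finite[OF fc]]] .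
        moreover have "supp h \<subseteq> dual_monoid \<tau>" using sh um by blast
        ultimately have "h \<in> coord \<tau>" unfolding coord_def monoid_semiring_def by simp
        then have "h \<in> gen \<tau>" using hP' e1 by blast
        then have hn: "\<forall>m. nilpotent_elem (h m)" unfolding gen_def by simp
        have "f m = h (\<lambda>i. u i + m i)" for m unfolding hm by simp
        then have "\<forall>m. nilpotent_elem (f m)" using hn by simp
        then show "f \<in> gen \<sigma>" using fc unfolding gen_def by simp
      qed
    next
      have "(gen \<sigma> :: (('n \<Rightarrow> int) \<Rightarrow> 'a) set) \<subseteq> gen (\<tau> \<inter> \<sigma>)" using gen_contract[of "\<tau> \<inter> \<sigma>" \<sigma>] by auto
      also have "\<dots> \<subseteq> P'" by (rule gen_minimal[OF P'])
      finally show "gen \<sigma> \<subseteq> P" using e2 unfolding gen_def by auto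
    qed
    then show "x \<in> (\<lambda>\<sigma>. (\<sigma>, gen \<sigma>)) ` \<Delta>" using x \<sigma> by blast
  qed
qed

theorem proposition5p14:
  fixes \<Delta> :: "('n::finite \<Rightarrow> real) set set"
  assumes "fan \<Delta>"
    and "idempotent_semiring TYPE('a::comm_semiring_1)"
    and "irreducible_semiring TYPE('a)"
  shows "toric_scheme_irreducible TYPE('a) \<Delta>"
proof -
  have fan: "fan \<Delta>" by fact
  have idem: "\<forall>x::'a. x + x = x" using assms(2) unfolding idempotent_semiring_def by simp
  have irr: "\<forall>x y::'a. nilpotent_elem (x * y) \<longrightarrow> nilpotent_elem x \<or> nilpotent_elem y"
    using assms(3) unfolding irreducible_semiring_def by simp
  define X where "X = toric_points TYPE('a) \<Delta>"
  define c0 where "c0 = (\<lambda>\<sigma>. (\<sigma>, (gen \<sigma> :: (('n \<Rightarrow> int) \<Rightarrow> 'a) set))) ` \<Delta>"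
  obtain \<tau>0 where \<tau>0: "\<tau>0 \<in> \<Delta>" using fan unfolding fan_def by blast
  have c0X: "c0 \<in> X"
  proof -
    have "(\<tau>0, gen \<tau>0) \<in> (SIGMA \<sigma>:\<Delta>. spec (coord \<sigma> :: (('n \<Rightarrow> int) \<Rightarrow> 'a) set))"
      using \<tau>0 gen_spec[OF idem irr] by blast
    then have "glue_rel TYPE('a) \<Delta> `` {(\<tau>0, gen \<tau>0)} \<in> X"
      unfolding X_def toric_points_def by (rule quotientI)
    then show ?thesis using class_eq[OF fan idem irr \<tau>0] unfolding c0_def by simp
  qed
  have key: "c0 \<in> U" if op: "toric_open TYPE('a) \<Delta> U" and ne: "U \<noteq> {}" for U
  proof -
    obtain c where cU: "c \<in> U" using ne by blast
    then have "c \<in> X" using op unfolding toric_open_def X_def by blast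
    then obtain y where y: "y \<in> (SIGMA \<sigma>:\<Delta>. spec (coord \<sigma> :: (('n \<Rightarrow> int) \<Rightarrow> 'a) set))"
      and c: "c = glue_rel TYPE('a) \<Delta> `` {y}"
      unfolding X_def toric_points_def by (rule quotientE)
    then obtain \<tau> Q where yq: "y = (\<tau>, Q)" and \<tau>: "\<tau> \<in> \<Delta>" and Q: "Q \<in> spec (coord \<tau> :: (('n \<Rightarrow> int) \<Rightarrow> 'a) set)"
      by blast
    have "zariski_open (coord \<tau> :: (('n \<Rightarrow> int) \<Rightarrow> 'a) set)
        {P \<in> spec (coord \<tau>). glue_rel TYPE('a) \<Delta> `` {(\<tau>, P)} \<in> U}"
      using op \<tau> unfolding toric_open_def by blast
    then obtain E where E: "{P \<in> spec (coord \<tau> :: (('n \<Rightarrow> int) \<Rightarrow> 'a) set). glue_rel TYPE('a) \<Delta> `` {(\<tau>, P)} \<in> U}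
        = {P \<in> spec (coord \<tau>). \<not> E \<subseteq> P}"
      unfolding zariski_open_def by blast
    have "Q \<in> {P \<in> spec (coord \<tau> :: (('n \<Rightarrow> int) \<Rightarrow> 'a) set). glue_rel TYPE('a) \<Delta> `` {(\<tau>, P)} \<in> U}"
      using Q cU c yq by simp
    then have "\<not> E \<subseteq> Q" using E by blast
    moreover have "gen \<tau> \<subseteq> Q" by (rule gen_minimal[OF Q])
    ultimately have "\<not> E \<subseteq> gen \<tau>" by blast
    moreover have gs: "(gen \<tau> :: (('n \<Rightarrow> int) \<Rightarrow> 'a) set) \<in> spec (coord \<tau>)" by (rule gen_spec[OF idem irr])
    ultimately have "gen \<tau> \<in> {P \<in> spec (coord \<tau> :: (('n \<Rightarrow> int) \<Rightarrow> 'a) set). \<not> E \<subseteq> P}" by blast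
    then have "glue_rel TYPE('a) \<Delta> `` {(\<tau>, gen \<tau>)} \<in> U" using E by blast
    then show "c0 \<in> U" using class_eq[OF fan idem irr \<tau>] unfolding c0_def by simp
  qed
  show ?thesis
    unfolding toric_scheme_irreducible_def irreducible_space_def X_def[symmetric]
  proof (intro conjI allI impI)
    show "X \<noteq> {}" using c0X by blast
  next
    fix U V assume h: "toric_open TYPE('a) \<Delta> U \<and> toric_open TYPE('a) \<Delta> V \<and> (X - U) \<union> (X - V) = X"
    show "X - U = X \<or> X - V = X"
    proof (cases "U = {} \<or> V = {}")
      case True then show ?thesis by auto
    next
      case False
      then have "c0 \<in> U" "c0 \<in> V" using key h by auto
      then have "c0 \<notin> (X - U) \<union> (X - V)" by blast
      then show ?thesis using h c0X by blast
    qed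
  qed
qed

end
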